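(* Let $K\subset\mathbb{R}^m$ be a pointed, closed, convex cone with nonempty interior which is finitely generated, let $C\subset\mathbb{R}^m$ be a finite set with $0\notin C$ and $K^*=\operatorname{cone}(\operatorname{conv}(C))$, and let $F:\mathbb{R}^n\to\mathbb{R}^m$ be continuously differentiable. Define $h(x,d)=\max\{\langle JF(x)d,w\rangle : w\in C\}$ and $v(x)=\arg\min_{d}\{h(x,d)+\tfrac12\|d\|^2\}$. Fix $0<\rho<1$, $0<\delta<1$, $\mu>2$, and $e\in\operatorname{int}(K)$ with $\langle w,e\rangle\le1$ for all $w\in C$. Let $x^0\in\mathbb{R}^n$ and assume: (A1) there is an open set $\Lambda$ containing $\mathcal{L}=\{x: F(x)\preceq_K F(x^0)\}$ such that $\|JF(x)-JF(y)\|\le L\|x-y\|$ for all $x,y\in\Lambda$; (A2) every sequence $\{D_k\}\subset F(\mathcal{L})$ with $D_{k+1}\preceq_K D_k$ for all $k$ admits $D\in\mathbb{R}^m$ with $D\preceq_K D_k$ for all $k$. Let $\{x^k\}$ be an infinite sequence generated as follows: $d^0=v(x^0)$; for $k\ge1$, $d^k=v(x^k)+\beta_k d^{k-1}$ with $$\beta_k=\frac{-h(x^k,v(x^k))\big(|h(x^{k-1},v(x^k))|+h(x^{k-1},v(x^k))\big)}{\max\big\{\mu|h(x^k,d^{k-1})h(x^{k-1},v(x^k))|,\ -\mu h(x^{k-1},v(x^{k-1}))|h(x^{k-1},v(x^k))|\big\}};$$ $x^{k+1}=x^k+\alpha_kd^k$, where, with $\tau_k=-h(x^k,d^k)/\|d^k\|^2$,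 $\alpha_k$ is the largest element of $\{\tau_k,\delta\tau_k,\delta^2\tau_k,\dots\}$ satisfying the Armijo condition $$F(x^k+\alpha_kd^k)\preceq_K F(x^k)+\rho\alpha_k h(x^k,d^k)e.$$ Then $$\sum_{k\ge0}\frac{h^2(x^k,d^k)}{\|d^k\|^2}<\infty.$$
   Context: $u\preceq_K v$ means $v-u\in K$. $K^*$ is the positive polar cone of $K$ and $JF$ the Jacobian of $F$. The sequence is assumed infinite, i.e. $v(x^k)\neq0$ for all $k$ (equivalently no $x^k$ is a $K$-Pareto critical point). *)

theory Defs
  imports "HOL-Analysis.Analysis"
begin

definition cone_le :: "'a::real_vector set \<Rightarrow> 'a \<Rightarrow> 'a \<Rightarrow> bool" where
  "cone_le K u v \<longleftrightarrow> v - u \<in> K"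

definition pos_polar :: "'a::real_inner set \<Rightarrow> 'a set" where
  "pos_polar K = {w. \<forall>k\<in>K. 0 \<le> w \<bullet> k}"

definition pointed :: "'a::real_vector set \<Rightarrow> bool" where
  "pointed K \<longleftrightarrow> K \<inter> uminus ` K \<subseteq> {0}"

text \<open>h(x,d) = max { <JF(x) d, w> : w \<in> C }, where J x is the Jacobian matrix of F at x.\<close>
definition hfun :: "(real^'n::finite \<Rightarrow> real^'n^'m::finite) \<Rightarrow> (real^'m) set \<Rightarrow> real^'n \<Rightarrow> real^'n \<Rightarrow> real" where
  "hfun J C x d = Max ((\<lambda>w. (J x *v d) \<bullet> w) ` C)"

text \<open>v(x) = argmin_d h(x,d) + 1/2 ||d||^2 (the minimiser is unique by strong convexity).\<close>
definition vdir :: "(real^'n::finite \<Rightarrow> real^'n^'m::finite) \<Rightarrow> (real^'m) set \<Rightarrow> real^'n \<Rightarrow> real^'n" where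
  "vdir J C x = (THE d. \<forall>d'. hfun J C x d + (1/2) * (norm d)^2 \<le> hfun J C x d' + (1/2) * (norm d')^2)"

end

theory Submission
  imports Defs
begin


lemma h_ge: "finite C \<Longrightarrow> w \<in> C \<Longrightarrow> (J x *v d) \<bullet> w \<le> hfun J C x d"
  unfolding hfun_def by (rule Max_ge) auto

lemma h_in: "finite C \<Longrightarrow> C \<noteq> {} \<Longrightarrow> \<exists>w\<in>C. hfun J C x d = (J x *v d) \<bullet> w"
proof -
  assume a: "finite C" "C \<noteq> {}"
  have "Max ((\<lambda>w. (J x *v d) \<bullet> w) ` C) \<in> (\<lambda>w. (J x *v d) \<bullet> w) ` C"
    using a by (intro Max_in) auto
  then show ?thesis unfolding hfun_def by auto
qed

lemma h_le: "finite C \<Longrightarrow> C \<noteq> {} \<Longrightarrow> (\<And>w. w \<in> C \<Longrightarrow> (J x *v d) \<bullet> w \<le> c) \<Longrightarrow> hfun J C x d \<le> c"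
  by (metis h_in)

lemma h_zero: "finite C \<Longrightarrow> C \<noteq> {} \<Longrightarrow> hfun J C x 0 = 0"
  using h_in[of C J x 0] by auto

lemma h_add: "finite C \<Longrightarrow> C \<noteq> {} \<Longrightarrow> hfun J C x (u + v) \<le> hfun J C x u + hfun J C x v"
proof -
  assume f: "finite C" and ne: "C \<noteq> {}"
  then obtain w where w: "w \<in> C" "hfun J C x (u + v) = (J x *v (u+v)) \<bullet> w" using h_in by blast
  have "(J x *v (u+v)) \<bullet> w = (J x *v u) \<bullet> w + (J x *v v) \<bullet> w"
    by (simp add: matrix_vector_right_distrib inner_add_left)
  also have "\<dots> \<le> hfun J C x u + hfun J C x v" using h_ge[OF f w(1)] by (meson add_mono)
  finally show ?thesis using w by simp
qed

lemma h_scale: "finite C \<Longrightarrow> C \<noteq> {} \<Longrightarrow> 0 \<le> b \<Longrightarrow> hfun J C x (b *\<^sub>R u) \<le> b * hfun J C x u"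
proof -
  assume f: "finite C" and ne: "C \<noteq> {}" and b: "0 \<le> b"
  then obtain w where w: "w \<in> C" "hfun J C x (b *\<^sub>R u) = (J x *v (b *\<^sub>R u)) \<bullet> w" using h_in by blast
  have "(J x *v (b *\<^sub>R u)) \<bullet> w = b * ((J x *v u) \<bullet> w)"
    by (simp add: matrix_vector_mult_scaleR)
  also have "\<dots> \<le> b * hfun J C x u" using h_ge[OF f w(1), of J x u] b by (simp add: mult_left_mono)
  finally show ?thesis using w by simp
qed

lemma h_bound: 
  fixes J :: "real^'n::finite \<Rightarrow> real^'n^'m::finite"
  assumes "finite C" "C \<noteq> {}"
  shows "\<exists>B\<ge>0. \<forall>u. \<bar>hfun J C x u\<bar> \<le> B * norm u"
proof -
  have bl: "bounded_linear (\<lambda>u. J x *v u)" by simp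
  define W where "W = (\<Sum>w\<in>C. norm w)"
  have W: "\<And>w. w \<in> C \<Longrightarrow> norm w \<le> W" unfolding W_def
    using assms(1) by (intro member_le_sum) auto
  define B where "B = onorm (\<lambda>u. J x *v u) * W"
  have W0: "0 \<le> W" unfolding W_def by (simp add: sum_nonneg)
  have ob: "0 \<le> onorm (\<lambda>u. J x *v u)" using onorm_pos_le[OF bl] .
  have key: "\<bar>(J x *v u) \<bullet> w\<bar> \<le> B * norm u" if "w \<in> C" for w u
  proof -
    have "\<bar>(J x *v u) \<bullet> w\<bar> \<le> norm (J x *v u) * norm w" by (rule Cauchy_Schwarz_ineq2)
    also have "\<dots> \<le> (onorm (\<lambda>u. J x *v u) * norm u) * W"
      using onorm[OF bl, of u] W[OF that] ob by (intro mult_mono) auto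
    finally show ?thesis unfolding B_def by (simp add: algebra_simps)
  qed
  have "\<bar>hfun J C x u\<bar> \<le> B * norm u" for u
    using h_in[OF assms, of J x u] key by fastforce
  moreover have "0 \<le> B" unfolding B_def using W0 ob by simp
  ultimately show ?thesis by blast
qed



lemma vdir_le:
  fixes J :: "real^'n::finite \<Rightarrow> real^'n^'m::finite"
  assumes f: "finite C" and ne: "C \<noteq> {}"
  shows "hfun J C x (vdir J C x) + (1/2) * (norm (vdir J C x))^2 \<le> 0"
proof -
  define g where "g d = hfun J C x d + (1/2) * (norm d)^2" for d
  obtain B where B0: "B \<ge> 0" and B: "\<And>u. \<bar>hfun J C x u\<bar> \<le> B * norm u"
    using h_bound[OF f ne] by blast
  have lip: "\<bar>hfun J C x u - hfun J C x v\<bar> \<le> B * norm (u - v)" for u v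
  proof -
    have 1: "hfun J C x u \<le> hfun J C x v + hfun J C x (u - v)"
      using h_add[OF f ne, of J x v "u - v"] by simp
    have 2: "hfun J C x v \<le> hfun J C x u + hfun J C x (v - u)"
      using h_add[OF f ne, of J x u "v - u"] by simp
    have 3: "norm (v - u) = norm (u - v)" by (simp add: norm_minus_commute)
    show ?thesis using 1 2 B[of "u - v"] B[of "v - u"] 3 by (auto simp: abs_le_iff)
  qed
  have ch: "continuous_on UNIV (hfun J C x)"
    by (rule lipschitz_on_continuous_on[of B]) (use B0 lip in \<open>auto simp: lipschitz_on_def dist_norm dist_real_def\<close>)
  have cg: "continuous_on UNIV g" unfolding g_def
    by (intro continuous_intros ch)
  define R where "R = 2 * B + 1"
  obtain d where dS: "d \<in> cball 0 R" and dmin: "\<And>y. y \<in> cball 0 R \<Longrightarrow> g d \<le> g y"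
  proof -
    have "cball (0::real^'n) R \<noteq> {}" using R_def B0 by auto
    moreover have "continuous_on (cball 0 R) g" using cg by (rule continuous_on_subset) simp
    ultimately obtain d0 where "d0 \<in> cball 0 R" "\<forall>y\<in>cball 0 R. g d0 \<le> g y"
      using continuous_attains_inf[OF compact_cball] by blast
    then show ?thesis by (intro that[of d0]) auto
  qed
  have g0: "g 0 = 0" unfolding g_def using h_zero[OF f ne] by simp
  have "0 \<in> cball (0::real^'n) R" using R_def B0 by simp
  then have gd0: "g d \<le> 0" using dmin g0 by fastforce
  have gmin: "g d \<le> g y" for y
  proof (cases "y \<in> cball 0 R")
    case True then show ?thesis using dmin by blast
  next
    case False
    then have ny: "norm y > R" by simp
    have "- (B * norm y) \<le> hfun J C x y" using B[of y] by linarith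
    then have "g y \<ge> norm y * ((1/2) * norm y - B)" unfolding g_def by (simp add: power2_eq_square algebra_simps)
    moreover have "norm y * ((1/2) * norm y - B) > 0" using ny R_def B0 by (intro mult_pos_pos) auto
    ultimately show ?thesis using gd0 by linarith
  qed
  have uniq: "d1 = d2" if m1: "\<forall>y. g d1 \<le> g y" and m2: "\<forall>y. g d2 \<le> g y" for d1 d2
  proof (rule ccontr)
    assume ne12: "d1 \<noteq> d2"
    define m where "m = (1/2) *\<^sub>R (d1 + d2)"
    have hm: "hfun J C x m \<le> (1/2) * (hfun J C x d1 + hfun J C x d2)"
    proof -
      have a: "hfun J C x m \<le> 1/2 * hfun J C x (d1 + d2)"
        unfolding m_def by (rule h_scale[OF f ne]) simp
      have b: "1/2 * hfun J C x (d1 + d2) \<le> 1/2 * (hfun J C x d1 + hfun J C x d2)"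
        using h_add[OF f ne, of J x d1 d2] by simp
      show ?thesis using a b by (rule order_trans)
    qed
    have par: "(norm (d1 + d2))^2 + (norm (d1 - d2))^2 = 2 * (norm d1)^2 + 2 * (norm d2)^2"
      by (simp add: power2_norm_eq_inner inner_add_left inner_add_right inner_diff_left inner_diff_right inner_commute)
    have nm: "(norm m)^2 = (1/4) * (norm (d1 + d2))^2" unfolding m_def by (simp add: power2_eq_square)
    have pos: "(norm (d1 - d2))^2 > 0" using ne12 by simp
    have aux: "hm' + (1/2) * n < (1/2) * (h1 + (1/2) * a + (h2 + (1/2) * b))"
      if "hm' \<le> 1/2 * (h1 + h2)" "s + t = 2 * a + 2 * b" "n = 1/4 * s" "0 < t"
      for hm' h1 h2 a b n s t :: real using that by (simp add: field_simps)
    have "g m < (1/2) * (g d1 + g d2)" unfolding g_def by (rule aux[OF hm par nm pos])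
    moreover have "g d1 \<le> g m" "g d2 \<le> g m" using m1 m2 by auto
    moreover have "g d1 = g d2" using m1 m2 by (meson order.antisym)
    ultimately show False by argo
  qed
  have ex1: "\<exists>!d. \<forall>d'. g d \<le> g d'"
    using gmin uniq by blast
  have "\<forall>d'. g (vdir J C x) \<le> g d'"
    unfolding vdir_def g_def[symmetric] by (rule theI'[OF ex1])
  then show ?thesis using g0 unfolding g_def by (metis g_def)
qed



lemma dual_cone:
  fixes K :: "(real^'m::finite) set"
  assumes cl: "closed K" and cv: "convex K" and cn: "cone K" and ne: "K \<noteq> {}"
    and z: "\<forall>w\<in>pos_polar K. 0 \<le> w \<bullet> z"
  shows "z \<in> K"
proof (rule ccontr)
  assume zK: "z \<notin> K"
  obtain a b where ab: "a \<bullet> z < b" "\<forall>x\<in>K. b < a \<bullet> x"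
    using separating_hyperplane_closed_point[OF cv cl zK] by blast
  have K0: "0 \<in> K" using cn ne unfolding cone_def by (metis order.refl scaleR_zero_left ex_in_conv)
  have b0: "b < 0" using ab(2) K0 by auto
  have "a \<in> pos_polar K" unfolding pos_polar_def
  proof (safe)
    fix y assume yK: "y \<in> K"
    show "0 \<le> a \<bullet> y"
    proof (rule ccontr)
      assume "\<not> 0 \<le> a \<bullet> y"
      then have ay: "a \<bullet> y < 0" by simp
      define c where "c = b / (a \<bullet> y)"
      have c0: "0 \<le> c" unfolding c_def using ay b0 by (simp add: divide_nonpos_neg less_imp_le)
      have "c *\<^sub>R y \<in> K" using cn yK c0 unfolding cone_def by blast
      then have "b < a \<bullet> (c *\<^sub>R y)" using ab(2) by blast
      moreover have "a \<bullet> (c *\<^sub>R y) = b" unfolding c_def using ay by simp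
      ultimately show False by simp
    qed
  qed
  then have "0 \<le> a \<bullet> z" using z by blast
  then show False using ab(1) b0 by simp
qed

lemma polar_C:
  fixes K :: "(real^'m::finite) set"
  assumes cl: "closed K" and cv: "convex K" and cn: "cone K" and ne: "K \<noteq> {}"
    and CG: "pos_polar K = cone hull (convex hull C)"
    and z: "\<forall>w\<in>C. 0 \<le> w \<bullet> z"
  shows "z \<in> K"
proof (rule dual_cone[OF cl cv cn ne])
  define H where "H = {w::real^'m. z \<bullet> w \<ge> 0}"
  have "convex hull C \<subseteq> H"
  proof (rule hull_minimal)
    show "C \<subseteq> H" using z by (auto simp: H_def inner_commute)
    show "convex H" unfolding H_def by (rule convex_halfspace_ge)
  qed
  moreover have "cone H" unfolding H_def cone_def by simp
  ultimately have "cone hull (convex hull C) \<subseteq> H" by (rule hull_minimal)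
  then show "\<forall>w\<in>pos_polar K. 0 \<le> w \<bullet> z" using CG by (auto simp: H_def inner_commute)
qed

lemma C_sub_polar: "pos_polar K = cone hull (convex hull C) \<Longrightarrow> C \<subseteq> pos_polar K"
  by (metis hull_subset subset_trans)

lemma mvt_bound:
  fixes F :: "real^'n::finite \<Rightarrow> real^'m::finite" and J :: "real^'n \<Rightarrow> real^'n^'m"
  assumes F_deriv: "\<And>z. (F has_derivative (\<lambda>u. J z *v u)) (at z)"
    and lipL: "\<forall>y\<in>\<Lambda>. \<forall>z\<in>\<Lambda>. onorm (\<lambda>u. (J y - J z) *v u) \<le> L * norm (y - z)"
    and seg: "\<forall>s\<in>{0..t}. x + s *\<^sub>R d \<in> \<Lambda>" and t: "0 < t"
  shows "w \<bullet> F (x + t *\<^sub>R d) - w \<bullet> F x \<le> t * ((J x *v d) \<bullet> w) + t^2 * (\<bar>L\<bar> * norm w * (norm d)^2)"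
proof -
  define \<phi> where "\<phi> s = w \<bullet> F (x + s *\<^sub>R d)" for s
  have der: "(\<phi> has_derivative (\<lambda>h. w \<bullet> (J (x + s *\<^sub>R d) *v (h *\<^sub>R d)))) (at s)" for s
  proof -
    have d1: "((\<lambda>s. x + s *\<^sub>R d) has_derivative (\<lambda>h. h *\<^sub>R d)) (at s)"
      by (auto intro!: derivative_eq_intros)
    have d3: "((\<lambda>s. F (x + s *\<^sub>R d)) has_derivative (\<lambda>h. J (x + s *\<^sub>R d) *v (h *\<^sub>R d))) (at s)"
      using diff_chain_at[OF d1 F_deriv[of "x + s *\<^sub>R d"]] by (simp add: o_def)
    show ?thesis unfolding \<phi>_def by (rule has_derivative_inner_right[OF d3])
  qed
  have cont: "continuous_on {0..t} \<phi>"
    using der by (meson continuous_at_imp_continuous_on has_derivative_continuous)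
  obtain \<xi> where xi: "0 < \<xi>" "\<xi> < t" and eq: "\<phi> t - \<phi> 0 = w \<bullet> (J (x + \<xi> *\<^sub>R d) *v ((t - 0) *\<^sub>R d))"
    using mvt[OF t cont der] by blast
  have eq2: "\<phi> t - \<phi> 0 = t * (w \<bullet> (J (x + \<xi> *\<^sub>R d) *v d))"
    using eq by (simp add: matrix_vector_mult_scaleR)
  have inL1: "x + \<xi> *\<^sub>R d \<in> \<Lambda>" using seg xi by auto
  have inL0: "x \<in> \<Lambda>" using seg t by (metis atLeastAtMost_iff less_imp_le order.refl add.right_neutral scaleR_zero_left)
  define A where "A = J (x + \<xi> *\<^sub>R d) - J x"
  have split: "w \<bullet> (J (x + \<xi> *\<^sub>R d) *v d) = (J x *v d) \<bullet> w + w \<bullet> (A *v d)"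
    unfolding A_def by (simp add: matrix_vector_mult_diff_rdistrib inner_diff_right inner_commute)
  have on: "norm (A *v d) \<le> onorm (\<lambda>u. A *v u) * norm d"
    using onorm[OF matrix_vector_mul_bounded_linear[of A], of d] by simp
  have on2: "onorm (\<lambda>u. A *v u) \<le> L * norm (\<xi> *\<^sub>R d)"
    using lipL inL1 inL0 unfolding A_def by fastforce
  have onpos: "0 \<le> onorm (\<lambda>u. A *v u)"
    using onorm_pos_le[OF matrix_vector_mul_bounded_linear[of A]] by simp
  have "w \<bullet> (A *v d) \<le> norm w * norm (A *v d)" by (rule norm_cauchy_schwarz)
  also have "\<dots> \<le> norm w * (onorm (\<lambda>u. A *v u) * norm d)" using on by (simp add: mult_left_mono)
  also have "\<dots> \<le> norm w * ((\<bar>L\<bar> * (t * norm d)) * norm d)"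
  proof -
    have "L * norm (\<xi> *\<^sub>R d) \<le> \<bar>L\<bar> * (t * norm d)"
    proof -
      have "L * norm (\<xi> *\<^sub>R d) \<le> \<bar>L\<bar> * norm (\<xi> *\<^sub>R d)" by (simp add: mult_right_mono)
      also have "\<dots> \<le> \<bar>L\<bar> * (t * norm d)" using xi by (simp add: mult_left_mono mult_right_mono)
      finally show ?thesis .
    qed
    then have "onorm (\<lambda>u. A *v u) \<le> \<bar>L\<bar> * (t * norm d)" using on2 by linarith
    then show ?thesis by (simp add: mult_left_mono mult_right_mono)
  qed
  finally have E: "w \<bullet> (A *v d) \<le> t * (\<bar>L\<bar> * norm w * (norm d)^2)"
    by (simp add: power2_eq_square algebra_simps)
  have "\<phi> t - \<phi> 0 = t * ((J x *v d) \<bullet> w) + t * (w \<bullet> (A *v d))"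
    using eq2 split by (simp add: algebra_simps)
  also have "\<dots> \<le> t * ((J x *v d) \<bullet> w) + t * (t * (\<bar>L\<bar> * norm w * (norm d)^2))"
    using E t by (simp add: mult_left_mono)
  finally show ?thesis unfolding \<phi>_def by (simp add: power2_eq_square algebra_simps)
qed



lemma cone_add_K:
  assumes "convex K" "cone K" "a \<in> K" "b \<in> K" shows "a + b \<in> K"
proof -
  have "(1/2) *\<^sub>R a + (1/2) *\<^sub>R b \<in> K" using assms(1,3,4) unfolding convex_def by auto
  then have "2 *\<^sub>R ((1/2) *\<^sub>R a + (1/2) *\<^sub>R b) \<in> K" using assms(2) unfolding cone_def by auto
  then show ?thesis by (simp add: scaleR_right_distrib)
qed

lemma cone_le_trans:
  assumes "convex K" "cone K" "cone_le K a b" "cone_le K b c" shows "cone_le K a c"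
proof -
  have "(b - a) + (c - b) \<in> K" using assms cone_add_K unfolding cone_le_def by blast
  then show ?thesis unfolding cone_le_def by simp
qed

context
  fixes K C :: "(real^'m::finite) set" and F :: "real^'n::finite \<Rightarrow> real^'m" and J :: "real^'n \<Rightarrow> real^'n^'m"
    and \<rho> :: real and e :: "real^'m" and \<Lambda> :: "(real^'n) set" and L Lp :: real and x0 :: "real^'n"
  assumes Kcl: "closed K" and Kcv: "convex K" and Kcn: "cone K" and Kne: "K \<noteq> {}"
    and CG: "pos_polar K = cone hull (convex hull C)"
    and Cf: "finite C" and Cne: "C \<noteq> {}"
    and F_deriv: "\<And>z. (F has_derivative (\<lambda>u. J z *v u)) (at z)"
    and lipL: "\<forall>y\<in>\<Lambda>. \<forall>z\<in>\<Lambda>. onorm (\<lambda>u. (J y - J z) *v u) \<le> L * norm (y - z)"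
    and \<Lambda>open: "open \<Lambda>" and Lev\<Lambda>: "{z. cone_le K (F z) (F x0)} \<subseteq> \<Lambda>"
    and eK: "e \<in> K" and eC: "\<forall>w\<in>C. w \<bullet> e \<le> 1"
    and \<rho>: "0 < \<rho>" "\<rho> < 1"
    and Lp: "\<forall>w\<in>C. \<bar>L\<bar> * norm w \<le> Lp"
begin

lemma armijo_at:
  assumes seg: "\<forall>s\<in>{0..t}. x + s *\<^sub>R d \<in> \<Lambda>" and t: "0 < t"
    and h: "hfun J C x d < 0"
    and tb: "t * Lp * (norm d)^2 \<le> (1 - \<rho>) * (- hfun J C x d)"
  shows "cone_le K (F (x + t *\<^sub>R d)) (F x + (\<rho> * t * hfun J C x d) *\<^sub>R e)"
  unfolding cone_le_def
proof (rule polar_C[OF Kcl Kcv Kcn Kne CG], intro ballI)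
  fix w assume w: "w \<in> C"
  let ?h = "hfun J C x d"
  have m: "w \<bullet> F (x + t *\<^sub>R d) - w \<bullet> F x \<le> t * ((J x *v d) \<bullet> w) + t^2 * (\<bar>L\<bar> * norm w * (norm d)^2)"
    by (rule mvt_bound[OF F_deriv lipL seg t])
  have 1: "t * ((J x *v d) \<bullet> w) \<le> t * ?h" using h_ge[OF Cf w, of J x d] t by (simp add: mult_left_mono)
  have 2: "t^2 * (\<bar>L\<bar> * norm w * (norm d)^2) \<le> t^2 * (Lp * (norm d)^2)"
    using Lp w by (intro mult_left_mono mult_right_mono) auto
  have 3: "t^2 * (Lp * (norm d)^2) \<le> t * ((1 - \<rho>) * (- ?h))"
  proof -
    have "t^2 * (Lp * (norm d)^2) = t * (t * Lp * (norm d)^2)" by (simp add: power2_eq_square)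
    also have "\<dots> \<le> t * ((1 - \<rho>) * (- ?h))" using tb t by (intro mult_left_mono) auto
    finally show ?thesis .
  qed
  have 4: "\<rho> * t * ?h \<le> \<rho> * t * ?h * (w \<bullet> e)"
  proof -
    have "\<rho> * t * ?h \<le> 0" using \<rho> t h by (simp add: mult_nonneg_nonpos)
    then have "\<rho> * t * ?h * 1 \<le> \<rho> * t * ?h * (w \<bullet> e)" using eC w by (intro mult_left_mono_neg) auto
    then show ?thesis by simp
  qed
  have 5: "t * ?h + t * ((1 - \<rho>) * (- ?h)) = \<rho> * t * ?h" by (simp add: algebra_simps)
  have "w \<bullet> F (x + t *\<^sub>R d) - w \<bullet> F x \<le> \<rho> * t * ?h * (w \<bullet> e)"
    using m 1 2 3 4 5 by linarith
  then show "0 \<le> w \<bullet> (F x + (\<rho> * t * ?h) *\<^sub>R e - F (x + t *\<^sub>R d))"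
    by (simp add: inner_add_right inner_diff_right)
qed

lemma armijo_Lev:
  assumes x: "cone_le K (F x) (F x0)" and t: "0 \<le> t" and h: "hfun J C x d \<le> 0"
    and arm: "cone_le K (F (x + t *\<^sub>R d)) (F x + (\<rho> * t * hfun J C x d) *\<^sub>R e)"
  shows "cone_le K (F (x + t *\<^sub>R d)) (F x0)"
proof -
  have "(- (\<rho> * t * hfun J C x d)) *\<^sub>R e \<in> K"
  proof -
    have "0 \<le> - (\<rho> * t * hfun J C x d)" using \<rho> t h by (simp add: mult_nonneg_nonpos)
    then show ?thesis using eK Kcn unfolding cone_def by blast
  qed
  then have "cone_le K (F x + (\<rho> * t * hfun J C x d) *\<^sub>R e) (F x)" unfolding cone_le_def by simp
  then show ?thesis using cone_le_trans[OF Kcv Kcn] arm x by blast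
qed

lemma Lev_closed: "closed {z. cone_le K (F z) (F x0)}"
proof -
  have "{z. cone_le K (F z) (F x0)} = (\<lambda>z. F x0 - F z) -` K" unfolding cone_le_def by auto
  moreover have "continuous (at z) (\<lambda>z. F x0 - F z)" for z
    using has_derivative_continuous[OF F_deriv[of z]] by (intro continuous_intros)
  ultimately show ?thesis using continuous_closed_vimage[OF Kcl] by metis
qed

lemma seg_in_Lev:
  assumes x: "cone_le K (F x) (F x0)" and h: "hfun J C x d < 0" and a: "0 < a"
    and ab: "a * Lp * (norm d)^2 \<le> (1 - \<rho>) * (- hfun J C x d)"
  shows "\<forall>s\<in>{0..a}. cone_le K (F (x + s *\<^sub>R d)) (F x0)"
proof (rule ccontr)
  let ?Lev = "{z. cone_le K (F z) (F x0)}"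
  define B where "B = {s\<in>{0..a}. x + s *\<^sub>R d \<notin> ?Lev}"
  assume "\<not> ?thesis"
  then have Bne: "B \<noteq> {}" unfolding B_def by auto
  have Bbdd: "bdd_below B" unfolding B_def by (rule bdd_belowI[of _ 0]) auto
  define ts where "ts = Inf B"
  have ts0: "0 \<le> ts" unfolding ts_def using Bne by (intro cInf_greatest) (auto simp: B_def)
  have below: "x + s *\<^sub>R d \<in> ?Lev" if "0 \<le> s" "s < ts" "s \<le> a" for s
  proof (rule ccontr)
    assume "x + s *\<^sub>R d \<notin> ?Lev"
    then have "s \<in> B" unfolding B_def using that by auto
    then have "ts \<le> s" unfolding ts_def using Bbdd by (rule cInf_lower)
    then show False using that by simp
  qed
  obtain b0 where b0: "b0 \<in> B" using Bne by blast
  have tsa: "ts \<le> a" using cInf_lower[OF b0 Bbdd] b0 unfolding ts_def B_def by auto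
  have tsL: "x + ts *\<^sub>R d \<in> ?Lev"
  proof (cases "ts = 0")
    case True then show ?thesis using x by simp
  next
    case False
    then have tsp: "0 < ts" using ts0 by simp
    have ev: "eventually (\<lambda>s. x + s *\<^sub>R d \<in> ?Lev) (at_left ts)"
      using eventually_at_left_real[OF tsp] by eventually_elim (use below tsa in auto)
    have lim: "((\<lambda>s. x + s *\<^sub>R d) \<longlongrightarrow> x + ts *\<^sub>R d) (at_left ts)"
      by (intro tendsto_intros tendsto_ident_at)
    show ?thesis by (rule Lim_in_closed_set[OF Lev_closed ev _ lim]) simp
  qed
  obtain \<epsilon> where eps: "\<epsilon> > 0" "ball (x + ts *\<^sub>R d) \<epsilon> \<subseteq> \<Lambda>"
    using \<Lambda>open Lev\<Lambda> tsL open_contains_ball by blast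
  define \<delta>' where "\<delta>' = \<epsilon> / (norm d + 1)"
  have dp: "\<delta>' > 0" unfolding \<delta>'_def using eps by (simp add: add_nonneg_pos)
  obtain b where bB: "b \<in> B" and bl: "b < ts + \<delta>'"
    using cInf_less_iff[OF Bne Bbdd, of "ts + \<delta>'"] dp unfolding ts_def by auto
  have tsb: "ts \<le> b" using cInf_lower[OF bB Bbdd] unfolding ts_def .
  have bneq: "b \<noteq> ts" using bB tsL unfolding B_def by auto
  have tsb': "ts < b" using tsb bneq by simp
  have ba: "b \<le> a" "0 \<le> b" using bB unfolding B_def by auto
  have seg: "\<forall>s\<in>{0..b}. x + s *\<^sub>R d \<in> \<Lambda>"
  proof
    fix s assume s: "s \<in> {0..b}"
    show "x + s *\<^sub>R d \<in> \<Lambda>"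
    proof (cases "s \<le> ts")
      case True
      then have "x + s *\<^sub>R d \<in> ?Lev"
        using below[of s] tsL s ba by (cases "s = ts") auto
      then show ?thesis using Lev\<Lambda> by blast
    next
      case False
      have "dist (x + ts *\<^sub>R d) (x + s *\<^sub>R d) = (s - ts) * norm d"
        using False by (simp add: dist_norm scaleR_diff_left[symmetric] norm_minus_commute)
      also have "\<dots> \<le> (b - ts) * norm d" using s by (intro mult_right_mono) auto
      also have "\<dots> < \<delta>' * (norm d + 1)"
      proof -
        have "(b - ts) * norm d \<le> \<delta>' * norm d" using bl by (intro mult_right_mono) auto
        then show ?thesis using dp by (simp add: algebra_simps)
      qed
      also have "\<dots> = \<epsilon>" unfolding \<delta>'_def
        using norm_ge_zero[of d] by (simp add: field_simps del: norm_ge_zero)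
      finally show ?thesis using eps(2) by auto
    qed
  qed
  have bp: "0 < b" using tsb' ts0 by simp
  have bb: "b * Lp * (norm d)^2 \<le> (1 - \<rho>) * (- hfun J C x d)"
  proof -
    have "0 \<le> Lp" using Lp Cne by (meson abs_ge_zero all_not_in_conv norm_ge_zero order_trans zero_le_mult_iff)
    then have "b * Lp * (norm d)^2 \<le> a * Lp * (norm d)^2" using ba by (intro mult_right_mono) auto
    then show ?thesis using ab by linarith
  qed
  have "cone_le K (F (x + b *\<^sub>R d)) (F x + (\<rho> * b * hfun J C x d) *\<^sub>R e)"
    by (rule armijo_at[OF seg bp h bb])
  then have "cone_le K (F (x + b *\<^sub>R d)) (F x0)"
    using armijo_Lev[OF x _ _] ba h by simp
  then show False using bB unfolding B_def by auto
qed

lemma step_bound: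
  assumes x: "cone_le K (F x) (F x0)" and h: "hfun J C x d < 0" and a: "0 < a"
    and fail: "\<not> cone_le K (F (x + a *\<^sub>R d)) (F x + (\<rho> * a * hfun J C x d) *\<^sub>R e)"
  shows "(1 - \<rho>) * (- hfun J C x d) < a * Lp * (norm d)^2"
proof (rule ccontr)
  assume "\<not> ?thesis"
  then have ab: "a * Lp * (norm d)^2 \<le> (1 - \<rho>) * (- hfun J C x d)" by simp
  have "\<forall>s\<in>{0..a}. x + s *\<^sub>R d \<in> \<Lambda>"
    using seg_in_Lev[OF x h a ab] Lev\<Lambda> by blast
  then show False using armijo_at[OF _ a h ab] fail by blast
qed

end



lemma beta_bound:
  fixes hvk hvk1 a q \<mu> \<beta> :: real
  assumes hvk: "hvk < 0" and hvk1: "hvk1 < 0" and mu: "\<mu> > 2"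
    and b: "\<beta> = (- hvk * (\<bar>a\<bar> + a)) / max (\<mu> * \<bar>q * a\<bar>) (- \<mu> * hvk1 * \<bar>a\<bar>)"
  shows "0 \<le> \<beta> \<and> \<beta> * q \<le> - (2 / \<mu>) * hvk"
proof (cases "a \<le> 0")
  case True
  then have "\<bar>a\<bar> + a = 0" by simp
  then have "\<beta> = 0" using b by simp
  then show ?thesis using hvk mu by (simp add: divide_neg_pos less_imp_le)
next
  case False
  then have a: "a > 0" by simp
  define D where "D = max (\<mu> * \<bar>q * a\<bar>) (- \<mu> * hvk1 * \<bar>a\<bar>)"
  have D1: "D \<ge> - \<mu> * hvk1 * a" unfolding D_def using a by simp
  have "\<mu> * hvk1 < 0" using mu hvk1 by (simp add: mult_pos_neg)
  then have "\<mu> * hvk1 * a < 0" using a by (simp add: mult_neg_pos)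
  then have "- \<mu> * hvk1 * a > 0" by simp
  then have Dp: "D > 0" using D1 by linarith
  have D2: "D \<ge> \<mu> * (\<bar>q\<bar> * a)" unfolding D_def using a by (simp add: abs_mult)
  have bb: "\<beta> = (- hvk) * (2 * a) / D" using b a unfolding D_def by simp
  have b0: "0 \<le> \<beta>" unfolding bb using Dp hvk a by (intro divide_nonneg_pos mult_nonneg_nonneg) auto
  have "\<beta> * q \<le> \<beta> * \<bar>q\<bar>" using b0 by (simp add: mult_left_mono)
  also have "\<beta> * \<bar>q\<bar> = (2 * (- hvk)) * ((\<bar>q\<bar> * a) / D)" unfolding bb by (simp add: field_simps)
  also have "\<dots> \<le> (2 * (- hvk)) * (1 / \<mu>)"
  proof (rule mult_left_mono)
    show "\<bar>q\<bar> * a / D \<le> 1 / \<mu>" using D2 Dp mu by (simp add: divide_simps mult.commute)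
    show "0 \<le> 2 * - hvk" using hvk by simp
  qed
  also have "\<dots> = - (2 / \<mu>) * hvk" by simp
  finally show ?thesis using b0 by simp
qed

lemma ratio_bound:
  fixes n hh Lp \<delta> \<rho> a :: real
  assumes n: "n > 0" and hh: "hh < 0" and Lp: "Lp > 0" and \<delta>: "0 < \<delta>" and \<rho>: "\<rho> < 1"
    and ab: "(1 - \<rho>) * (- hh) < a * Lp * n"
  shows "hh^2 / n \<le> Lp / (\<delta> * (1 - \<rho>)) * ((\<delta> * a) * (- hh))"
proof -
  have "(1 - \<rho>) * (- hh) * (- hh) \<le> a * Lp * n * (- hh)"
    using ab hh by (intro mult_right_mono) auto
  then have 1: "hh^2 * (1 - \<rho>) \<le> Lp * a * (- hh) * n" by (simp add: power2_eq_square algebra_simps)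
  have "Lp / (\<delta> * (1 - \<rho>)) * ((\<delta> * a) * (- hh)) = Lp * a * (- hh) / (1 - \<rho>)"
    using \<delta> \<rho> by (simp add: field_simps)
  moreover have "hh^2 / n \<le> Lp * a * (- hh) / (1 - \<rho>)"
    using 1 n \<rho> by (simp add: divide_simps mult.commute mult.left_commute)
  ultimately show ?thesis by simp
qed



theorem mainTheorem3:
  fixes K :: "(real^'m) set" and C :: "(real^'m) set"
    and F :: "real^'n \<Rightarrow> real^'m" and J :: "real^'n \<Rightarrow> real^'n^'m"
    and \<rho> \<delta> \<mu> :: real and e :: "real^'m"
    and x d :: "nat \<Rightarrow> real^'n" and \<alpha> \<beta> \<tau> :: "nat \<Rightarrow> real"
  assumes K_pointed: "pointed K" and K_closed: "closed K" and K_convex: "convex K"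
    and K_cone: "cone K" and K_int: "interior K \<noteq> {}"
    and K_fg: "\<exists>S. finite S \<and> K = convex hull (cone hull S)"
    and C_fin: "finite C" and C_0: "0 \<notin> C"
    and C_gen: "pos_polar K = cone hull (convex hull C)"
    and F_deriv: "\<And>z. (F has_derivative (\<lambda>u. J z *v u)) (at z)"
    and J_cont: "continuous_on UNIV J"
    and \<rho>: "0 < \<rho>" "\<rho> < 1" and \<delta>: "0 < \<delta>" "\<delta> < 1" and \<mu>: "\<mu> > 2"
    and e_int: "e \<in> interior K" and e_C: "\<forall>w\<in>C. w \<bullet> e \<le> 1"
    and A1: "\<exists>\<Lambda> L. open \<Lambda> \<and> {z. cone_le K (F z) (F (x 0))} \<subseteq> \<Lambda> \<and>
              (\<forall>y\<in>\<Lambda>. \<forall>z\<in>\<Lambda>. onorm (\<lambda>u. (J y - J z) *v u) \<le> L * norm (y - z))"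
    and A2: "\<forall>D :: nat \<Rightarrow> real^'m.
              (\<forall>k. D k \<in> F ` {z. cone_le K (F z) (F (x 0))}) \<and> (\<forall>k. cone_le K (D (Suc k)) (D k))
              \<longrightarrow> (\<exists>D0. \<forall>k. cone_le K D0 (D k))"
    and d0: "d 0 = vdir J C (x 0)"
    and dk: "\<And>k. k \<ge> 1 \<Longrightarrow> d k = vdir J C (x k) + \<beta> k *\<^sub>R d (k - 1)"
    and \<beta>k: "\<And>k. k \<ge> 1 \<Longrightarrow> \<beta> k =
          (- hfun J C (x k) (vdir J C (x k))
             * (\<bar>hfun J C (x (k - 1)) (vdir J C (x k))\<bar> + hfun J C (x (k - 1)) (vdir J C (x k))))
          / max (\<mu> * \<bar>hfun J C (x k) (d (k - 1)) * hfun J C (x (k - 1)) (vdir J C (x k))\<bar>)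
                (- \<mu> * hfun J C (x (k - 1)) (vdir J C (x (k - 1)))
                   * \<bar>hfun J C (x (k - 1)) (vdir J C (x k))\<bar>)"
    and \<tau>k: "\<And>k. \<tau> k = - hfun J C (x k) (d k) / (norm (d k))^2"
    and \<alpha>k_in: "\<And>k. \<alpha> k \<in> {\<delta> ^ j * \<tau> k | j. True}"
    and \<alpha>k_armijo: "\<And>k. cone_le K (F (x k + \<alpha> k *\<^sub>R d k))
                          (F (x k) + (\<rho> * \<alpha> k * hfun J C (x k) (d k)) *\<^sub>R e)"
    and \<alpha>k_largest: "\<And>k a. a \<in> {\<delta> ^ j * \<tau> k | j. True} \<Longrightarrow>
          cone_le K (F (x k + a *\<^sub>R d k)) (F (x k) + (\<rho> * a * hfun J C (x k) (d k)) *\<^sub>R e)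
          \<Longrightarrow> a \<le> \<alpha> k"
    and xk: "\<And>k. x (Suc k) = x k + \<alpha> k *\<^sub>R d k"
    and infinite: "\<And>k. vdir J C (x k) \<noteq> 0"
  shows "summable (\<lambda>k. (hfun J C (x k) (d k))^2 / (norm (d k))^2)"
proof -
  let ?Lev = "{z. cone_le K (F z) (F (x 0))}"
  define hv where "hv k = hfun J C (x k) (vdir J C (x k))" for k
  define hd where "hd k = hfun J C (x k) (d k)" for k
  have Kne: "K \<noteq> {}" using K_int interior_subset by blast
  have Cne: "C \<noteq> {}"
  proof
    assume "C = {}"
    then have "pos_polar K = {}" using C_gen by (simp add: cone_hull_empty)
    moreover have "0 \<in> pos_polar K" unfolding pos_polar_def by simp
    ultimately show False by simp
  qed
  obtain \<Lambda> L where \<Lambda>open: "open \<Lambda>" and Lev\<Lambda>: "?Lev \<subseteq> \<Lambda>"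
    and lipL: "\<forall>y\<in>\<Lambda>. \<forall>z\<in>\<Lambda>. onorm (\<lambda>u. (J y - J z) *v u) \<le> L * norm (y - z)"
    using A1 by blast
  define W where "W = (\<Sum>w\<in>C. norm w)"
  define Lp where "Lp = \<bar>L\<bar> * W + 1"
  have W0: "0 \<le> W" unfolding W_def by (simp add: sum_nonneg)
  have Lpp: "Lp > 0" unfolding Lp_def using W0 by (simp add: add_nonneg_pos)
  have Lp: "\<forall>w\<in>C. \<bar>L\<bar> * norm w \<le> Lp"
  proof
    fix w assume "w \<in> C"
    then have "norm w \<le> W" unfolding W_def using C_fin by (intro member_le_sum) auto
    then have "\<bar>L\<bar> * norm w \<le> \<bar>L\<bar> * W" by (simp add: mult_left_mono)
    then show "\<bar>L\<bar> * norm w \<le> Lp" unfolding Lp_def by simp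
  qed
  have eK: "e \<in> K" using e_int interior_subset by blast
  note ctx = K_closed K_convex K_cone Kne C_gen C_fin Cne F_deriv lipL \<Lambda>open Lev\<Lambda> eK e_C \<rho> Lp
  have hv_neg: "hv k < 0" for k
  proof -
    have "hv k + (1/2) * (norm (vdir J C (x k)))^2 \<le> 0" unfolding hv_def by (rule vdir_le[OF C_fin Cne])
    moreover have "(norm (vdir J C (x k)))^2 > 0" using infinite[of k] by simp
    ultimately show ?thesis by linarith
  qed
  have hd_neg: "hd k \<le> (1 - 2 / \<mu>) * hv k" for k
  proof (cases k)
    case 0
    have "hd k = hv k" unfolding hd_def hv_def using 0 d0 by simp
    moreover have "0 \<le> (2 / \<mu>) * (- hv k)" using \<mu> hv_neg[of k] by (intro mult_nonneg_nonneg) auto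
    ultimately show ?thesis by (simp add: algebra_simps)
  next
    case (Suc j)
    then have k1: "k \<ge> 1" by simp
    have jk: "k - 1 = j" using Suc by simp
    have bb: "0 \<le> \<beta> k \<and> \<beta> k * hfun J C (x k) (d j) \<le> - (2 / \<mu>) * hv k"
      by (rule beta_bound[OF hv_neg[of k] hv_neg[of j] \<mu>]) (use \<beta>k[OF k1] jk in \<open>simp add: hv_def\<close>)
    have "hd k = hfun J C (x k) (vdir J C (x k) + \<beta> k *\<^sub>R d j)" unfolding hd_def using dk[OF k1] jk by simp
    also have "\<dots> \<le> hv k + hfun J C (x k) (\<beta> k *\<^sub>R d j)" unfolding hv_def by (rule h_add[OF C_fin Cne])
    also have "\<dots> \<le> hv k + \<beta> k * hfun J C (x k) (d j)" using h_scale[OF C_fin Cne, of "\<beta> k" J "x k" "d j"] bb by simp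
    also have "\<dots> \<le> hv k - (2 / \<mu>) * hv k" using bb by simp
    finally show ?thesis by (simp add: algebra_simps)
  qed
  have hdn: "hd k < 0" for k
  proof -
    have "0 < 1 - 2 / \<mu>" using \<mu> by simp
    then have "(1 - 2 / \<mu>) * hv k < 0" using hv_neg[of k] by (simp add: mult_pos_neg)
    then show ?thesis using hd_neg[of k] by linarith
  qed
  have dnz: "norm (d k) > 0" for k
  proof -
    have "d k \<noteq> 0" using hdn[of k] h_zero[OF C_fin Cne, of J "x k"] unfolding hd_def by auto
    then show ?thesis by simp
  qed
  have taup: "\<tau> k > 0" for k using \<tau>k[of k] hdn[of k] dnz[of k] unfolding hd_def by (simp add: divide_neg_pos)
  have alp: "\<alpha> k > 0" for k
  proof -
    obtain j where "\<alpha> k = \<delta> ^ j * \<tau> k" using \<alpha>k_in[of k] by blast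
    then show ?thesis using \<delta> taup[of k] by simp
  qed
  have inLev: "cone_le K (F (x k)) (F (x 0))" for k
  proof (induction k)
    case 0
    have "0 \<in> K" using K_cone Kne unfolding cone_def by (metis ex_in_conv order.refl scaleR_zero_left)
    then show ?case unfolding cone_le_def by simp
  next
    case (Suc k)
    show ?case unfolding xk
      by (rule armijo_Lev[OF ctx Suc]) (use alp[of k] hdn[of k] \<alpha>k_armijo[of k] in \<open>auto simp: hd_def\<close>)
  qed
  obtain w0 where w0: "w0 \<in> C" using Cne by blast
  have w0pol: "w0 \<in> pos_polar K" using C_sub_polar[OF C_gen] w0 by blast
  have c0: "w0 \<bullet> e > 0"
  proof -
    obtain \<epsilon> where eps: "\<epsilon> > 0" "ball e \<epsilon> \<subseteq> K" using e_int open_interior open_contains_ball interior_subset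
      by (metis open_contains_ball_eq subset_trans)
    have w0nz: "w0 \<noteq> 0" using w0 C_0 by auto
    define c where "c = (\<epsilon> / 2) / norm w0"
    have "e - c *\<^sub>R w0 \<in> ball e \<epsilon>" unfolding c_def using eps w0nz by (simp add: dist_norm)
    then have "e - c *\<^sub>R w0 \<in> K" using eps by blast
    then have "0 \<le> w0 \<bullet> (e - c *\<^sub>R w0)" using w0pol unfolding pos_polar_def by blast
    also have "w0 \<bullet> (e - c *\<^sub>R w0) = w0 \<bullet> e - (\<epsilon> / 2) * norm w0"
      unfolding c_def using w0nz by (simp add: inner_diff_right power2_norm_eq_inner[symmetric] power2_eq_square)
    finally have "(\<epsilon> / 2) * norm w0 \<le> w0 \<bullet> e" by simp
    moreover have "(\<epsilon> / 2) * norm w0 > 0" using eps w0nz by simp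
    ultimately show ?thesis by linarith
  qed
  obtain D0 where D0: "\<forall>k. cone_le K D0 (F (x k))"
  proof -
    have "(\<forall>k. F (x k) \<in> F ` ?Lev) \<and> (\<forall>k. cone_le K (F (x (Suc k))) (F (x k)))"
    proof (intro conjI allI)
      fix k show "F (x k) \<in> F ` ?Lev" using inLev[of k] by blast
      have "cone_le K (F (x k + \<alpha> k *\<^sub>R d k)) (F (x k))"
      proof -
        have "0 \<le> - (\<rho> * \<alpha> k * hd k)" using \<rho> alp[of k] hdn[of k]
          by (simp add: mult_nonneg_nonpos less_imp_le)
        then have "(- (\<rho> * \<alpha> k * hd k)) *\<^sub>R e \<in> K" using eK K_cone unfolding cone_def by blast
        then have "cone_le K (F (x k) + (\<rho> * \<alpha> k * hd k) *\<^sub>R e) (F (x k))" unfolding cone_le_def by simp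
        then show ?thesis using cone_le_trans[OF K_convex K_cone \<alpha>k_armijo[of k]] unfolding hd_def by blast
      qed
      then show "cone_le K (F (x (Suc k))) (F (x k))" using xk by simp
    qed
    then have "\<exists>D0. \<forall>k. cone_le K D0 (F (x k))" using A2[rule_format, of "\<lambda>k. F (x k)"] by blast
    then show ?thesis using that by blast
  qed
  define S where "S k = \<alpha> k * (- hd k)" for k
  have S0: "0 \<le> S k" for k unfolding S_def using alp[of k] hdn[of k] by (simp add: mult_nonneg_nonpos less_imp_le)
  have Sstep: "\<rho> * (w0 \<bullet> e) * S k \<le> w0 \<bullet> F (x k) - w0 \<bullet> F (x (Suc k))" for k
  proof -
    have "0 \<le> w0 \<bullet> (F (x k) + (\<rho> * \<alpha> k * hd k) *\<^sub>R e - F (x (Suc k)))"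
      using \<alpha>k_armijo[of k] w0pol xk[of k] unfolding cone_le_def pos_polar_def hd_def by auto
    then show ?thesis unfolding S_def by (simp add: inner_add_right inner_diff_right algebra_simps)
  qed
  have Ssum: "(\<Sum>k<N. S k) \<le> (w0 \<bullet> F (x 0) - w0 \<bullet> D0) / (\<rho> * (w0 \<bullet> e))" for N
  proof -
    have "\<rho> * (w0 \<bullet> e) * (\<Sum>k<N. S k) = (\<Sum>k<N. \<rho> * (w0 \<bullet> e) * S k)" by (simp add: sum_distrib_left)
    also have "\<dots> \<le> (\<Sum>k<N. w0 \<bullet> F (x k) - w0 \<bullet> F (x (Suc k)))" by (intro sum_mono Sstep)
    also have "\<dots> = w0 \<bullet> F (x 0) - w0 \<bullet> F (x N)" by (induction N) auto
    also have "\<dots> \<le> w0 \<bullet> F (x 0) - w0 \<bullet> D0"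
    proof -
      have "0 \<le> w0 \<bullet> (F (x N) - D0)" using D0 w0pol unfolding cone_le_def pos_polar_def by blast
      then show ?thesis by (simp add: inner_diff_right)
    qed
    finally show ?thesis using \<rho> c0 by (simp add: pos_le_divide_eq mult.commute)
  qed
  have Ssum': "summable S" by (rule summableI_nonneg_bounded[OF S0 Ssum])
  define c' where "c' = max 1 (Lp / (\<delta> * (1 - \<rho>)))"
  have cmp: "(hd k)^2 / (norm (d k))^2 \<le> c' * S k" for k
  proof -
    obtain j where j: "\<alpha> k = \<delta> ^ j * \<tau> k" using \<alpha>k_in[of k] by blast
    show ?thesis
    proof (cases j)
      case 0
      then have "S k = (hd k)^2 / (norm (d k))^2"
        unfolding S_def using j \<tau>k[of k] by (simp add: hd_def power2_eq_square)
      moreover have "c' \<ge> 1" unfolding c'_def by simp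
      ultimately show ?thesis using S0[of k] by (metis mult_le_cancel_right1 not_le)
    next
      case (Suc i)
      define a where "a = \<delta> ^ i * \<tau> k"
      have al: "\<alpha> k = \<delta> * a" unfolding a_def using j Suc by simp
      have ap: "a > 0" unfolding a_def using \<delta> taup[of k] by simp
      have "\<alpha> k < a" using al ap \<delta> by simp
      then have fail: "\<not> cone_le K (F (x k + a *\<^sub>R d k)) (F (x k) + (\<rho> * a * hfun J C (x k) (d k)) *\<^sub>R e)"
        using \<alpha>k_largest[of a k] unfolding a_def by force
      have sb: "(1 - \<rho>) * (- hd k) < a * Lp * (norm (d k))^2"
        unfolding hd_def by (rule step_bound[OF ctx inLev hdn[unfolded hd_def] ap fail])
      have "(hd k)^2 / (norm (d k))^2 \<le> Lp / (\<delta> * (1 - \<rho>)) * ((\<delta> * a) * (- hd k))"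
        by (rule ratio_bound[OF _ hdn Lpp \<delta>(1) \<rho>(2) sb]) (use dnz[of k] in simp)
      also have "\<dots> \<le> c' * S k" unfolding S_def al c'_def using S0[of k] unfolding S_def al
        by (intro mult_right_mono) auto
      finally show ?thesis .
    qed
  qed
  have "summable (\<lambda>k. c' * S k)" using Ssum' by (rule summable_mult)
  then have "summable (\<lambda>k. (hd k)^2 / (norm (d k))^2)"
    by (rule summable_comparison_test'[where N=0]) (use cmp in simp)
  then show ?thesis unfolding hd_def .
qed


end
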